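(* If $R$ is a simple compact Hausdorff topological semiring, then $\{0\}$ and $R$ are the only closed subtractive ideals of $R$.
   Context: A semiring is an algebra $(R,+,\cdot,0)$ such that $(R,+,0)$ is a commutative monoid, $(R,\cdot)$ is a semigroup (no multiplicative identity is required), multiplication distributes over addition on both sides, and $0\cdot x = x\cdot 0 = 0$ for all $x\in R$. A topological semiring is a semiring with a topology in which addition and multiplication are continuous. A Hausdorff topological semiring $R$ is called simple if every non-constant continuous semiring homomorphism from $R$ into any Hausdorff topological semiring is injective. An ideal of $R$ is a submonoid $A$ of $(R,+,0)$ with $RA\cup AR\subseteq A$. A subset $A\subseteq R$ is subtractive if for all $x\in R$ and $a\in A$, $x+a\in A$ implies $x\in A$. *)

theory Defs
  imports "HOL-Analysis.Analysis"
begin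

definition semiring_on :: "'a set \<Rightarrow> ('a \<Rightarrow> 'a \<Rightarrow> 'a) \<Rightarrow> ('a \<Rightarrow> 'a \<Rightarrow> 'a) \<Rightarrow> 'a \<Rightarrow> bool" where
  "semiring_on S ad mu z \<longleftrightarrow>
     z \<in> S \<and>
     (\<forall>x\<in>S. \<forall>y\<in>S. ad x y \<in> S \<and> mu x y \<in> S) \<and>
     (\<forall>x\<in>S. \<forall>y\<in>S. \<forall>w\<in>S. ad (ad x y) w = ad x (ad y w)) \<and>
     (\<forall>x\<in>S. \<forall>y\<in>S. ad x y = ad y x) \<and>
     (\<forall>x\<in>S. ad z x = x) \<and>
     (\<forall>x\<in>S. \<forall>y\<in>S. \<forall>w\<in>S. mu (mu x y) w = mu x (mu y w)) \<and>
     (\<forall>x\<in>S. \<forall>y\<in>S. \<forall>w\<in>S. mu x (ad y w) = ad (mu x y) (mu x w)) \<and>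
     (\<forall>x\<in>S. \<forall>y\<in>S. \<forall>w\<in>S. mu (ad y w) x = ad (mu y x) (mu w x)) \<and>
     (\<forall>x\<in>S. mu z x = z \<and> mu x z = z)"

definition top_semiring :: "'a topology \<Rightarrow> ('a \<Rightarrow> 'a \<Rightarrow> 'a) \<Rightarrow> ('a \<Rightarrow> 'a \<Rightarrow> 'a) \<Rightarrow> 'a \<Rightarrow> bool" where
  "top_semiring T ad mu z \<longleftrightarrow>
     semiring_on (topspace T) ad mu z \<and>
     continuous_map (prod_topology T T) T (\<lambda>(x, y). ad x y) \<and>
     continuous_map (prod_topology T T) T (\<lambda>(x, y). mu x y)"

definition semiring_hom_on ::
  "'a set \<Rightarrow> ('a \<Rightarrow> 'a \<Rightarrow> 'a) \<Rightarrow> ('a \<Rightarrow> 'a \<Rightarrow> 'a) \<Rightarrow> 'a \<Rightarrow>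
   'b set \<Rightarrow> ('b \<Rightarrow> 'b \<Rightarrow> 'b) \<Rightarrow> ('b \<Rightarrow> 'b \<Rightarrow> 'b) \<Rightarrow> 'b \<Rightarrow> ('a \<Rightarrow> 'b) \<Rightarrow> bool" where
  "semiring_hom_on S ad mu z S' ad' mu' z' f \<longleftrightarrow>
     f ` S \<subseteq> S' \<and> f z = z' \<and>
     (\<forall>x\<in>S. \<forall>y\<in>S. f (ad x y) = ad' (f x) (f y) \<and> f (mu x y) = mu' (f x) (f y))"

text \<open>Target semirings range over carriers
  inside the type 'a set (this is equivalent to arbitrary targets,
  since one may replace a target by the image of the homomorphism).\<close>
definition simple_top_semiring :: "'a topology \<Rightarrow> ('a \<Rightarrow> 'a \<Rightarrow> 'a) \<Rightarrow> ('a \<Rightarrow> 'a \<Rightarrow> 'a) \<Rightarrow> 'a \<Rightarrow> bool" where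
  "simple_top_semiring T ad mu z \<longleftrightarrow>
     top_semiring T ad mu z \<and> Hausdorff_space T \<and>
     (\<forall>(T' :: 'a set topology) ad' mu' z' f.
        top_semiring T' ad' mu' z' \<and> Hausdorff_space T' \<and>
        semiring_hom_on (topspace T) ad mu z (topspace T') ad' mu' z' f \<and>
        continuous_map T T' f \<and>
        (\<exists>x\<in>topspace T. \<exists>y\<in>topspace T. f x \<noteq> f y)
        \<longrightarrow> inj_on f (topspace T))"

definition ideal_on :: "'a set \<Rightarrow> ('a \<Rightarrow> 'a \<Rightarrow> 'a) \<Rightarrow> ('a \<Rightarrow> 'a \<Rightarrow> 'a) \<Rightarrow> 'a \<Rightarrow> 'a set \<Rightarrow> bool" where
  "ideal_on S ad mu z A \<longleftrightarrow>
     A \<subseteq> S \<and> z \<in> A \<and>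
     (\<forall>a\<in>A. \<forall>b\<in>A. ad a b \<in> A) \<and>
     (\<forall>r\<in>S. \<forall>a\<in>A. mu r a \<in> A \<and> mu a r \<in> A)"

definition subtractive_on :: "'a set \<Rightarrow> ('a \<Rightarrow> 'a \<Rightarrow> 'a) \<Rightarrow> 'a set \<Rightarrow> bool" where
  "subtractive_on S ad A \<longleftrightarrow> (\<forall>x\<in>S. \<forall>a\<in>A. ad x a \<in> A \<longrightarrow> x \<in> A)"

end

theory Submission
  imports Defs
begin

locale qsetup =
  fixes T :: "'a topology" and ad mu :: "'a \<Rightarrow> 'a \<Rightarrow> 'a" and z :: 'a and A :: "'a set"
  assumes sr: "semiring_on (topspace T) ad mu z"
    and cad: "continuous_map (prod_topology T T) T (\<lambda>(x, y). ad x y)"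
    and cmu: "continuous_map (prod_topology T T) T (\<lambda>(x, y). mu x y)"
    and haus: "Hausdorff_space T"
    and cpt: "compact_space T"
    and idl: "ideal_on (topspace T) ad mu z A"
    and sub: "subtractive_on (topspace T) ad A"
    and clA: "closedin T A"
begin

abbreviation "R \<equiv> topspace T"

lemma zR: "z \<in> R" using sr unfolding semiring_on_def by blast
lemma adR: "x \<in> R \<Longrightarrow> y \<in> R \<Longrightarrow> ad x y \<in> R" using sr unfolding semiring_on_def by blast
lemma muR: "x \<in> R \<Longrightarrow> y \<in> R \<Longrightarrow> mu x y \<in> R" using sr unfolding semiring_on_def by blast
lemma assoc: "x \<in> R \<Longrightarrow> y \<in> R \<Longrightarrow> w \<in> R \<Longrightarrow> ad (ad x y) w = ad x (ad y w)"
  using sr unfolding semiring_on_def by blast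
lemma comm: "x \<in> R \<Longrightarrow> y \<in> R \<Longrightarrow> ad x y = ad y x"
  using sr unfolding semiring_on_def by blast
lemma zl: "x \<in> R \<Longrightarrow> ad z x = x" using sr unfolding semiring_on_def by blast
lemma zr: "x \<in> R \<Longrightarrow> ad x z = x" using zl comm zR by metis
lemma lcomm: "x \<in> R \<Longrightarrow> y \<in> R \<Longrightarrow> w \<in> R \<Longrightarrow> ad x (ad y w) = ad y (ad x w)"
  by (metis assoc comm)
lemma rdist: "x \<in> R \<Longrightarrow> y \<in> R \<Longrightarrow> w \<in> R \<Longrightarrow> mu (ad y w) x = ad (mu y x) (mu w x)"
  using sr unfolding semiring_on_def by blast
lemma ldist: "x \<in> R \<Longrightarrow> y \<in> R \<Longrightarrow> w \<in> R \<Longrightarrow> mu x (ad y w) = ad (mu x y) (mu x w)"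
  using sr unfolding semiring_on_def by blast

lemma AR: "A \<subseteq> R" using idl unfolding ideal_on_def by blast
lemma zA: "z \<in> A" using idl unfolding ideal_on_def by blast
lemma adA: "a \<in> A \<Longrightarrow> b \<in> A \<Longrightarrow> ad a b \<in> A" using idl unfolding ideal_on_def by blast
lemma muA: "r \<in> R \<Longrightarrow> a \<in> A \<Longrightarrow> mu r a \<in> A \<and> mu a r \<in> A" using idl unfolding ideal_on_def by blast

definition E :: "'a \<Rightarrow> 'a \<Rightarrow> bool" where
  "E x y \<longleftrightarrow> (\<exists>a\<in>A. \<exists>b\<in>A. ad x a = ad y b)"

lemma E_refl: "x \<in> R \<Longrightarrow> E x x" unfolding E_def using zA by blast
lemma E_sym: "E x y \<Longrightarrow> E y x" unfolding E_def by metis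
lemma E_trans: assumes "x \<in> R" "y \<in> R" "w \<in> R" "E x y" "E y w" shows "E x w"
proof -
  obtain a b where ab: "a \<in> A" "b \<in> A" "ad x a = ad y b" using assms(4) unfolding E_def by blast
  obtain c d where cd: "c \<in> A" "d \<in> A" "ad y c = ad w d" using assms(5) unfolding E_def by blast
  have R: "a \<in> R" "b \<in> R" "c \<in> R" "d \<in> R" using ab cd AR by auto
  have "ad x (ad a c) = ad (ad x a) c" using assms R by (simp add: assoc)
  also have "\<dots> = ad (ad y b) c" using ab by simp
  also have "\<dots> = ad (ad y c) b" using assms R by (metis assoc comm)
  also have "\<dots> = ad (ad w d) b" using cd by simp
  also have "\<dots> = ad w (ad d b)" using assms R by (simp add: assoc)
  finally show ?thesis unfolding E_def using ab cd adA by blast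
qed

lemma E_addr: assumes "x \<in> R" "y \<in> R" "u \<in> R" "E x y" shows "E (ad x u) (ad y u)"
proof -
  obtain a b where ab: "a \<in> A" "b \<in> A" "ad x a = ad y b" using assms(4) unfolding E_def by blast
  have R: "a \<in> R" "b \<in> R" using ab AR by auto
  have "ad (ad x u) a = ad (ad x a) u" using assms R by (metis assoc comm)
  also have "\<dots> = ad (ad y b) u" using ab by simp
  also have "\<dots> = ad (ad y u) b" using assms R by (metis assoc comm)
  finally show ?thesis unfolding E_def using ab by blast
qed

lemma E_add: assumes "x \<in> R" "y \<in> R" "x' \<in> R" "y' \<in> R" "E x x'" "E y y'"
  shows "E (ad x y) (ad x' y')"
proof -
  have "E (ad x y) (ad x' y)" using E_addr assms by blast
  moreover have "E (ad y x') (ad y' x')" using E_addr assms by blast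
  hence "E (ad x' y) (ad x' y')" using assms comm by metis
  ultimately show ?thesis using E_trans assms adR by blast
qed

lemma E_mulr: assumes "x \<in> R" "y \<in> R" "u \<in> R" "E x y" shows "E (mu x u) (mu y u)"
proof -
  obtain a b where ab: "a \<in> A" "b \<in> A" "ad x a = ad y b" using assms(4) unfolding E_def by blast
  have R: "a \<in> R" "b \<in> R" using ab AR by auto
  have "ad (mu x u) (mu a u) = ad (mu y u) (mu b u)" using rdist assms R ab by metis
  then show ?thesis unfolding E_def using muA ab assms by blast
qed

lemma E_mull: assumes "x \<in> R" "y \<in> R" "u \<in> R" "E x y" shows "E (mu u x) (mu u y)"
proof -
  obtain a b where ab: "a \<in> A" "b \<in> A" "ad x a = ad y b" using assms(4) unfolding E_def by blast
  have R: "a \<in> R" "b \<in> R" using ab AR by auto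
  have "ad (mu u x) (mu u a) = ad (mu u y) (mu u b)" using ldist assms R ab by metis
  then show ?thesis unfolding E_def using muA ab assms by blast
qed

lemma E_mul: assumes "x \<in> R" "y \<in> R" "x' \<in> R" "y' \<in> R" "E x x'" "E y y'"
  shows "E (mu x y) (mu x' y')"
proof -
  have "E (mu x y) (mu x' y)" using E_mulr assms by blast
  moreover have "E (mu x' y) (mu x' y')" using E_mull assms by blast
  ultimately show ?thesis using E_trans assms muR by blast
qed

definition cls :: "'a \<Rightarrow> 'a set" where "cls x = {y \<in> R. E x y}"

lemma cls_eq: assumes "x \<in> R" "y \<in> R" shows "cls x = cls y \<longleftrightarrow> E x y"
proof
  assume "cls x = cls y"
  then have "y \<in> cls x" using assms E_refl unfolding cls_def by blast
  then show "E x y" unfolding cls_def by blast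
next
  assume "E x y"
  then show "cls x = cls y" unfolding cls_def using assms E_trans E_sym by blast
qed

lemma cls_mem: "x \<in> R \<Longrightarrow> x \<in> cls x" unfolding cls_def using E_refl by blast

definition rep :: "'a set \<Rightarrow> 'a" where "rep P = (SOME x. x \<in> P)"

lemma rep: assumes "x \<in> R" shows "rep (cls x) \<in> R" "cls (rep (cls x)) = cls x"
proof -
  have "rep (cls x) \<in> cls x" unfolding rep_def using cls_mem[OF assms] by (metis someI)
  then show "rep (cls x) \<in> R" "cls (rep (cls x)) = cls x"
    using cls_eq assms E_sym unfolding cls_def by auto
qed

definition ad' where "ad' P Q = cls (ad (rep P) (rep Q))"
definition mu' where "mu' P Q = cls (mu (rep P) (rep Q))"

lemma ad'_cls: "x \<in> R \<Longrightarrow> y \<in> R \<Longrightarrow> ad' (cls x) (cls y) = cls (ad x y)"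
  unfolding ad'_def using rep[of x] rep[of y] cls_eq E_add adR by (metis E_sym)
lemma mu'_cls: "x \<in> R \<Longrightarrow> y \<in> R \<Longrightarrow> mu' (cls x) (cls y) = cls (mu x y)"
  unfolding mu'_def using rep[of x] rep[of y] cls_eq E_mul muR by (metis E_sym)

definition Q where "Q = cls ` R"

definition QT :: "'a set topology" where
  "QT = topology (\<lambda>U. U \<subseteq> Q \<and> openin T {x \<in> R. cls x \<in> U})"

lemma QT_open: "openin QT U \<longleftrightarrow> U \<subseteq> Q \<and> openin T {x \<in> R. cls x \<in> U}"
proof -
  have "istopology (\<lambda>U. U \<subseteq> Q \<and> openin T {x \<in> R. cls x \<in> U})"
    unfolding istopology_def
  proof (intro conjI)
    show "\<forall>S U. S \<subseteq> Q \<and> openin T {x \<in> R. cls x \<in> S} \<longrightarrow> U \<subseteq> Q \<and> openin T {x \<in> R. cls x \<in> U} \<longrightarrow>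
       S \<inter> U \<subseteq> Q \<and> openin T {x \<in> R. cls x \<in> S \<inter> U}"
    proof (intro allI impI)
      fix S U assume "S \<subseteq> Q \<and> openin T {x \<in> R. cls x \<in> S}" "U \<subseteq> Q \<and> openin T {x \<in> R. cls x \<in> U}"
      moreover have "{x \<in> R. cls x \<in> S \<inter> U} = {x \<in> R. cls x \<in> S} \<inter> {x \<in> R. cls x \<in> U}" by auto
      ultimately show "S \<inter> U \<subseteq> Q \<and> openin T {x \<in> R. cls x \<in> S \<inter> U}" by auto
    qed
    show "\<forall>K. (\<forall>S\<in>K. S \<subseteq> Q \<and> openin T {x \<in> R. cls x \<in> S}) \<longrightarrow> \<Union>K \<subseteq> Q \<and> openin T {x \<in> R. cls x \<in> \<Union>K}"
    proof (intro allI impI)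
      fix K assume K: "\<forall>S\<in>K. S \<subseteq> Q \<and> openin T {x \<in> R. cls x \<in> S}"
      have "{x \<in> R. cls x \<in> \<Union>K} = \<Union>((\<lambda>S. {x \<in> R. cls x \<in> S}) ` K)" by auto
      then show "\<Union>K \<subseteq> Q \<and> openin T {x \<in> R. cls x \<in> \<Union>K}" using K by auto
    qed
  qed
  then show ?thesis unfolding QT_def by simp
qed

lemma topspace_QT: "topspace QT = Q"
proof -
  have "{x \<in> R. cls x \<in> cls ` R} = R" by auto
  then have "openin QT Q" unfolding QT_open Q_def by simp
  then have "Q \<subseteq> topspace QT" by (simp add: openin_subset)
  moreover have "topspace QT \<subseteq> Q" using QT_open openin_topspace by blast
  ultimately show ?thesis by blast
qed

lemma quot: "quotient_map T QT cls"
  unfolding quotient_map_def topspace_QT QT_open Q_def by auto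

lemma cont_cls: "continuous_map T QT cls"
  using quot quotient_imp_continuous_map by blast

lemma cont2: assumes f: "continuous_map X T f" and g: "continuous_map X T g"
  shows "continuous_map X T (\<lambda>x. ad (f x) (g x))"
  using continuous_map_compose[OF continuous_map_pairedI[OF f g] cad] by (simp add: o_def)

lemma sat_closed: assumes C: "closedin T C"
  shows "closedin T {x \<in> R. \<exists>c\<in>C. E c x}"
proof -
  define P where "P = prod_topology T (prod_topology T (prod_topology T T))"
  define K where "K = {p \<in> topspace P. ad (fst (snd p)) (fst (snd (snd p))) = ad (fst p) (snd (snd (snd p)))}
     \<inter> (R \<times> (C \<times> (A \<times> A)))"
  have p1: "continuous_map P T fst" unfolding P_def by (rule continuous_map_fst)
  have p2: "continuous_map P T (\<lambda>p. fst (snd p))" unfolding P_def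
    by (rule continuous_map_compose[OF continuous_map_snd continuous_map_fst, unfolded o_def])
  have p34: "continuous_map P (prod_topology T T) (\<lambda>p. snd (snd p))" unfolding P_def
    by (rule continuous_map_compose[OF continuous_map_snd continuous_map_snd, unfolded o_def])
  have p3: "continuous_map P T (\<lambda>p. fst (snd (snd p)))"
    by (rule continuous_map_compose[OF p34 continuous_map_fst, unfolded o_def])
  have p4: "continuous_map P T (\<lambda>p. snd (snd (snd p)))"
    by (rule continuous_map_compose[OF p34 continuous_map_snd, unfolded o_def])
  have c1: "continuous_map P T (\<lambda>p. ad (fst (snd p)) (fst (snd (snd p))))"
    by (rule cont2[OF p2 p3])
  have c2: "continuous_map P T (\<lambda>p. ad (fst p) (snd (snd (snd p))))"
    by (rule cont2[OF p1 p4])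
  have "closedin P K" unfolding K_def
    by (intro closedin_Int closedin_continuous_maps_eq[OF haus c1 c2])
      (simp add: P_def closedin_prod_Times_iff C clA)
  then have "compactin P K" by (intro closedin_compact_space) (simp_all add: P_def compact_space_prod_topology cpt)
  then have "compactin T (fst ` K)" using image_compactin continuous_map_fst P_def by blast
  then have "closedin T (fst ` K)" using compactin_imp_closedin haus by blast
  moreover have "fst ` K = {x \<in> R. \<exists>c\<in>C. E c x}"
  proof
    show "fst ` K \<subseteq> {x \<in> R. \<exists>c\<in>C. E c x}"
    proof
      fix x assume "x \<in> fst ` K"
      then obtain c a b where "(x, c, a, b) \<in> K" by force
      then show "x \<in> {x \<in> R. \<exists>c\<in>C. E c x}" unfolding K_def E_def by auto
    qed
  next
    show "{x \<in> R. \<exists>c\<in>C. E c x} \<subseteq> fst ` K"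
    proof
      fix x assume "x \<in> {x \<in> R. \<exists>c\<in>C. E c x}"
      then obtain c a b where "x \<in> R" "c \<in> C" "a \<in> A" "b \<in> A" "ad c a = ad x b" unfolding E_def by blast
      moreover have "C \<subseteq> R" using C closedin_subset by blast
      ultimately have "(x, c, a, b) \<in> K" unfolding K_def P_def using AR by auto
      then show "x \<in> fst ` K" by force
    qed
  qed
  ultimately show ?thesis by simp
qed

lemma closed_cls: "closed_map T QT cls"
  unfolding closed_map_def
proof (intro allI impI)
  fix C assume C: "closedin T C"
  have CR: "C \<subseteq> R" using C closedin_subset by blast
  have "{x \<in> R. cls x \<in> cls ` C} = {x \<in> R. \<exists>c\<in>C. E c x}"
    using cls_eq CR by blast
  then have "closedin T {x \<in> R. cls x \<in> cls ` C}" using sat_closed C by simp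
  moreover have "cls ` C \<subseteq> topspace QT" using CR topspace_QT Q_def by auto
  ultimately show "closedin QT (cls ` C)" using quot unfolding quotient_map_closedin by blast
qed

lemma surj_cls: "cls ` R = topspace QT"
  by (simp add: topspace_QT Q_def)

lemma haus_QT: "Hausdorff_space QT"
proof -
  have "normal_space T" using compact_Hausdorff_or_regular_imp_normal_space cpt haus by blast
  then show ?thesis
    using normal_Hausdorff_space_closed_continuous_map_image[OF _ haus closed_cls cont_cls surj_cls] by blast
qed

lemma cpt_QT: "compact_space QT"
proof -
  have "compactin T R" using cpt compact_space_def by blast
  then have "compactin QT (cls ` R)" using image_compactin cont_cls by blast
  then show ?thesis unfolding compact_space_def surj_cls .
qed

lemma quot2: "quotient_map (prod_topology T T) (prod_topology QT QT) (\<lambda>(x,y). (cls x, cls y))"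
proof (rule continuous_closed_imp_quotient_map)
  show c: "continuous_map (prod_topology T T) (prod_topology QT QT) (\<lambda>(x, y). (cls x, cls y))"
    unfolding continuous_map_prod_top using cont_cls by blast
  have k: "compact_space (prod_topology T T)" unfolding compact_space_prod_topology using cpt by blast
  have h: "Hausdorff_space (prod_topology QT QT)" unfolding Hausdorff_space_prod_topology using haus_QT by blast
  show "closed_map (prod_topology T T) (prod_topology QT QT) (\<lambda>(x, y). (cls x, cls y))"
    by (rule continuous_imp_closed_map[OF c k h])
  have "(\<lambda>(x, y). (cls x, cls y)) ` (R \<times> R) = cls ` R \<times> cls ` R" by force
  then show "(\<lambda>(x, y). (cls x, cls y)) ` topspace (prod_topology T T) = topspace (prod_topology QT QT)"
    by (simp add: surj_cls)
qed

lemma cont_op: assumes c: "continuous_map (prod_topology T T) T (\<lambda>(x, y). f x y)"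
  and h: "\<And>x y. x \<in> R \<Longrightarrow> y \<in> R \<Longrightarrow> g (cls x) (cls y) = cls (f x y)"
  shows "continuous_map (prod_topology QT QT) QT (\<lambda>(P, P'). g P P')"
proof (rule continuous_compose_quotient_map[OF quot2])
  have "continuous_map (prod_topology T T) QT (cls \<circ> (\<lambda>(x, y). f x y))"
    by (rule continuous_map_compose[OF c cont_cls])
  then show "continuous_map (prod_topology T T) QT ((\<lambda>(P, P'). g P P') \<circ> (\<lambda>(x, y). (cls x, cls y)))"
    by (rule continuous_map_eq) (auto simp: h)
qed

lemma sr_Q: "semiring_on Q ad' mu' (cls z)"
  unfolding semiring_on_def Q_def
  by (auto simp: ad'_cls mu'_cls adR muR zR assoc comm lcomm zl zr ldist rdist
      sr[unfolded semiring_on_def, THEN conjunct2, THEN conjunct2, THEN conjunct2, THEN conjunct2, THEN conjunct2, THEN conjunct1, rule_format]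
      sr[unfolded semiring_on_def, THEN conjunct2, THEN conjunct2, THEN conjunct2, THEN conjunct2, THEN conjunct2, THEN conjunct2, THEN conjunct2, THEN conjunct2, rule_format])

lemma ts_Q: "top_semiring QT ad' mu' (cls z)"
  unfolding top_semiring_def topspace_QT
  using sr_Q cont_op[OF cad ad'_cls] cont_op[OF cmu mu'_cls] by blast

lemma hom: "semiring_hom_on R ad mu z (topspace QT) ad' mu' (cls z) cls"
  unfolding semiring_hom_on_def topspace_QT Q_def by (auto simp: ad'_cls mu'_cls)

lemma cls_z: "cls z = A"
proof -
  have "E z y \<longleftrightarrow> y \<in> A" if y: "y \<in> R" for y
  proof
    assume "E z y"
    then obtain a b where ab: "a \<in> A" "b \<in> A" "ad z a = ad y b" unfolding E_def by blast
    then have "ad y b \<in> A" using zl AR by auto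
    then show "y \<in> A" using sub y ab unfolding subtractive_on_def by blast
  next
    assume "y \<in> A"
    then have "ad z y = ad y z" using zl zr AR by auto
    then show "E z y" unfolding E_def using \<open>y \<in> A\<close> zA by blast
  qed
  then show ?thesis unfolding cls_def using AR by auto
qed

end

theorem corollary4p3:
  fixes T :: "'a topology" and ad mu :: "'a \<Rightarrow> 'a \<Rightarrow> 'a" and z :: 'a and A :: "'a set"
  assumes "simple_top_semiring T ad mu z"
    and "compact_space T"
    and "ideal_on (topspace T) ad mu z A"
    and "subtractive_on (topspace T) ad A"
    and "closedin T A"
  shows "A = {z} \<or> A = topspace T"
proof -
  interpret q: qsetup T ad mu z A
    using assms unfolding simple_top_semiring_def top_semiring_def by unfold_locales auto
  show ?thesis
  proof (cases "A = topspace T")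
    case True then show ?thesis by blast
  next
    case False
    then obtain y where y: "y \<in> topspace T" "y \<notin> A" using q.AR by blast
    have ne: "\<exists>x\<in>topspace T. \<exists>y\<in>topspace T. q.cls x \<noteq> q.cls y"
    proof (intro bexI)
      show "q.cls y \<noteq> q.cls z" using y q.cls_z q.cls_mem[OF y(1)] by blast
    qed (use y q.zR in auto)
    have S: "\<forall>(T' :: 'a set topology) ad' mu' z' f.
        top_semiring T' ad' mu' z' \<and> Hausdorff_space T' \<and>
        semiring_hom_on (topspace T) ad mu z (topspace T') ad' mu' z' f \<and>
        continuous_map T T' f \<and>
        (\<exists>x\<in>topspace T. \<exists>y\<in>topspace T. f x \<noteq> f y)
        \<longrightarrow> inj_on f (topspace T)"
      using assms(1) unfolding simple_top_semiring_def by (elim conjE)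
    have "inj_on q.cls (topspace T)"
      by (rule S[rule_format, of q.QT q.ad' q.mu' "q.cls z" q.cls])
        (intro conjI q.ts_Q q.haus_QT q.hom q.cont_cls ne)
    have "A \<subseteq> {z}"
    proof
      fix a assume a: "a \<in> A"
      then have aR: "a \<in> topspace T" using q.AR by blast
      have "a \<in> q.cls z" using a q.cls_z by simp
      then have "q.E z a" unfolding q.cls_def by blast
      then have "q.cls a = q.cls z" using q.cls_eq[OF aR q.zR] q.E_sym by blast
      then show "a \<in> {z}" using \<open>inj_on q.cls (topspace T)\<close> aR q.zR by (auto dest: inj_onD)
    qed
    then show ?thesis using q.zA by blast
  qed
qed

end
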